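(* Let $(\mathfrak g,\mathfrak k,\theta)$ be a reductive symmetric superpair and $x\in\mathfrak p_0$. Then \[\dim\mathfrak z_{\mathfrak k_1}(x)-\dim\mathfrak z_{\mathfrak p_1}(x)=\dim\mathfrak k_1-\dim\mathfrak p_1,\] where $\mathfrak z_{V}(x)=\{y\in V:[x,y]=0\}$.
   Context: A symmetric superpair $(\mathfrak g,\mathfrak k,\theta)$: finite-dimensional complex Lie superalgebra $\mathfrak g$, even involutive automorphism $\theta$, $\mathfrak k,\mathfrak p$ the $(+1),(-1)$-eigenspaces, $\mathfrak k_j=\mathfrak k\cap\mathfrak g_j$, $\mathfrak p_j=\mathfrak p\cap\mathfrak g_j$. Reductive: $\mathfrak g$ semisimple as $\mathfrak g_0$-module, $\mathfrak z(\mathfrak g)\subset\mathfrak g_0$, and there is a non-degenerate even supersymmetric $\mathfrak g$- and $\theta$-invariant bilinear form $b$ on $\mathfrak g$. *)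

theory Defs
  imports Complex_Main
begin

text \<open>A finite-dimensional complex Lie superalgebra is modelled on a type 'v with a
  complex scalar multiplication scale (so 'v is the whole of g), a Z/2-grading
  g = g0 (+) g1 given by two subspaces, and a bracket br.  Parities are booleans
  (False = even, True = odd).\<close>

definition grd :: "'v set \<Rightarrow> 'v set \<Rightarrow> bool \<Rightarrow> 'v set" where
  "grd g0 g1 i = (if i then g1 else g0)"

definition psign :: "bool \<Rightarrow> bool \<Rightarrow> complex" where
  "psign i j = (if i \<and> j then -1 else 1)"

definition fin_dim_complex_space :: "(complex \<Rightarrow> 'v::ab_group_add \<Rightarrow> 'v) \<Rightarrow> bool" where
  "fin_dim_complex_space scale \<longleftrightarrow>
     vector_space scale \<and> (\<exists>B. finite B \<and> module.span scale B = UNIV)"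

definition lie_superalgebra ::
  "(complex \<Rightarrow> 'v::ab_group_add \<Rightarrow> 'v) \<Rightarrow> 'v set \<Rightarrow> 'v set \<Rightarrow> ('v \<Rightarrow> 'v \<Rightarrow> 'v) \<Rightarrow> bool" where
  "lie_superalgebra scale g0 g1 br \<longleftrightarrow>
     fin_dim_complex_space scale
   \<and> module.subspace scale g0 \<and> module.subspace scale g1
   \<and> g0 \<inter> g1 = {0} \<and> (\<forall>v. \<exists>a\<in>g0. \<exists>c\<in>g1. v = a + c)
   \<and> (\<forall>x. Vector_Spaces.linear scale scale (br x))
   \<and> (\<forall>y. Vector_Spaces.linear scale scale (\<lambda>x. br x y))
   \<and> (\<forall>i j x y. x \<in> grd g0 g1 i \<longrightarrow> y \<in> grd g0 g1 j \<longrightarrow> br x y \<in> grd g0 g1 (i \<noteq> j))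
   \<and> (\<forall>i j x y. x \<in> grd g0 g1 i \<longrightarrow> y \<in> grd g0 g1 j \<longrightarrow>
        br x y = scale (- psign i j) (br y x))
   \<and> (\<forall>i j k x y z. x \<in> grd g0 g1 i \<longrightarrow> y \<in> grd g0 g1 j \<longrightarrow> z \<in> grd g0 g1 k \<longrightarrow>
        br x (br y z) = br (br x y) z + scale (psign i j) (br y (br x z)))"

definition even_involution ::
  "(complex \<Rightarrow> 'v::ab_group_add \<Rightarrow> 'v) \<Rightarrow> 'v set \<Rightarrow> 'v set \<Rightarrow> ('v \<Rightarrow> 'v \<Rightarrow> 'v) \<Rightarrow> ('v \<Rightarrow> 'v) \<Rightarrow> bool" where
  "even_involution scale g0 g1 br \<theta> \<longleftrightarrow>
     Vector_Spaces.linear scale scale \<theta> \<and> bij \<theta>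
   \<and> (\<forall>x y. \<theta> (br x y) = br (\<theta> x) (\<theta> y))
   \<and> \<theta> ` g0 \<subseteq> g0 \<and> \<theta> ` g1 \<subseteq> g1
   \<and> (\<forall>x. \<theta> (\<theta> x) = x)"

definition symmetric_superpair ::
  "(complex \<Rightarrow> 'v::ab_group_add \<Rightarrow> 'v) \<Rightarrow> 'v set \<Rightarrow> 'v set \<Rightarrow> ('v \<Rightarrow> 'v \<Rightarrow> 'v) \<Rightarrow> ('v \<Rightarrow> 'v) \<Rightarrow> bool" where
  "symmetric_superpair scale g0 g1 br \<theta> \<longleftrightarrow>
     lie_superalgebra scale g0 g1 br \<and> even_involution scale g0 g1 br \<theta>"

definition kpart :: "('v \<Rightarrow> 'v) \<Rightarrow> 'v set" where
  "kpart \<theta> = {x. \<theta> x = x}"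

definition ppart :: "('v::ab_group_add \<Rightarrow> 'v) \<Rightarrow> 'v set" where
  "ppart \<theta> = {x. \<theta> x = - x}"

definition centralizer :: "('v \<Rightarrow> 'v \<Rightarrow> 'v::zero) \<Rightarrow> 'v set \<Rightarrow> 'v \<Rightarrow> 'v set" where
  "centralizer br V x = {y \<in> V. br x y = 0}"

definition g0_submodule ::
  "(complex \<Rightarrow> 'v::ab_group_add \<Rightarrow> 'v) \<Rightarrow> 'v set \<Rightarrow> ('v \<Rightarrow> 'v \<Rightarrow> 'v) \<Rightarrow> 'v set \<Rightarrow> bool" where
  "g0_submodule scale g0 br W \<longleftrightarrow>
     module.subspace scale W \<and> (\<forall>a\<in>g0. \<forall>w\<in>W. br a w \<in> W)"

definition semisimple_g0_module ::
  "(complex \<Rightarrow> 'v::ab_group_add \<Rightarrow> 'v) \<Rightarrow> 'v set \<Rightarrow> ('v \<Rightarrow> 'v \<Rightarrow> 'v) \<Rightarrow> bool" where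
  "semisimple_g0_module scale g0 br \<longleftrightarrow>
     (\<forall>W. g0_submodule scale g0 br W \<longrightarrow>
        (\<exists>W'. g0_submodule scale g0 br W' \<and> W \<inter> W' = {0} \<and> (\<forall>v. \<exists>a\<in>W. \<exists>c\<in>W'. v = a + c)))"

definition center :: "('v \<Rightarrow> 'v \<Rightarrow> 'v::zero) \<Rightarrow> 'v set" where
  "center br = {z. \<forall>y. br z y = 0}"

definition good_form ::
  "(complex \<Rightarrow> 'v::ab_group_add \<Rightarrow> 'v) \<Rightarrow> 'v set \<Rightarrow> 'v set \<Rightarrow> ('v \<Rightarrow> 'v \<Rightarrow> 'v) \<Rightarrow> ('v \<Rightarrow> 'v)
     \<Rightarrow> ('v \<Rightarrow> 'v \<Rightarrow> complex) \<Rightarrow> bool" where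
  "good_form scale g0 g1 br \<theta> b \<longleftrightarrow>
     (\<forall>x. Vector_Spaces.linear scale (*) (b x))
   \<and> (\<forall>y. Vector_Spaces.linear scale (*) (\<lambda>x. b x y))
   \<and> (\<forall>x. (\<forall>y. b x y = 0) \<longrightarrow> x = 0)
   \<and> (\<forall>x\<in>g0. \<forall>y\<in>g1. b x y = 0 \<and> b y x = 0)
   \<and> (\<forall>i j x y. x \<in> grd g0 g1 i \<longrightarrow> y \<in> grd g0 g1 j \<longrightarrow> b x y = psign i j * b y x)
   \<and> (\<forall>x y z. b (br x y) z = b x (br y z))
   \<and> (\<forall>x y. b (\<theta> x) (\<theta> y) = b x y)"

definition reductive_symmetric_superpair ::
  "(complex \<Rightarrow> 'v::ab_group_add \<Rightarrow> 'v) \<Rightarrow> 'v set \<Rightarrow> 'v set \<Rightarrow> ('v \<Rightarrow> 'v \<Rightarrow> 'v) \<Rightarrow> ('v \<Rightarrow> 'v) \<Rightarrow> bool" where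
  "reductive_symmetric_superpair scale g0 g1 br \<theta> \<longleftrightarrow>
     symmetric_superpair scale g0 g1 br \<theta>
   \<and> semisimple_g0_module scale g0 br
   \<and> center br \<subseteq> g0
   \<and> (\<exists>b. good_form scale g0 g1 br \<theta> b)"

end

theory Submission imports Defs begin
context finite_dimensional_vector_space begin

lemma kernel_subspace:
  assumes S: "subspace S"
    and add: "\<And>e u v. g e (u+v) = g e u + g e v" and sc: "\<And>e c u. g e (c *s u) = c * g e u"
  shows "subspace {y\<in>S. \<forall>e\<in>E. g e y = 0}"
proof -
  have z: "g e 0 = 0" for e using sc[of e 0 0] by simp
  show ?thesis using S unfolding subspace_def by (auto simp: add sc z)
qed

lemma hyperplane_dim:
  assumes S: "subspace S"
    and add: "\<And>u v. g (u+v) = g u + g v" and sc: "\<And>c u. g (c *s u) = c * g u"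
  shows "dim S \<le> dim {y\<in>S. g y = 0} + 1"
proof (cases "\<forall>y\<in>S. g y = 0")
  case True
  then have "{y\<in>S. g y = 0} = S" by auto
  then show ?thesis by simp
next
  case False
  then obtain y0 where y0: "y0\<in>S" "g y0 \<noteq> 0" by auto
  let ?K = "{y\<in>S. g y = 0}"
  have "S \<subseteq> span (insert y0 ?K)"
  proof
    fix y assume y: "y\<in>S"
    define c where "c = g y / g y0"
    have d: "y - c *s y0 = y + (-c) *s y0" by simp
    have "g (y - c *s y0) = 0" unfolding d add sc using y0 by (simp add: c_def)
    moreover have "y - c *s y0 \<in> S" using y y0 S by (simp add: subspace_diff subspace_scale)
    ultimately have "y - c *s y0 \<in> span (insert y0 ?K)" by (intro span_base) auto
    moreover have "c *s y0 \<in> span (insert y0 ?K)" by (intro span_scale span_base) auto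
    ultimately have "(y - c *s y0) + c *s y0 \<in> span (insert y0 ?K)" by (rule span_add)
    then show "y \<in> span (insert y0 ?K)" by simp
  qed
  then have "dim S \<le> dim (insert y0 ?K)" by (rule dim_mono)
  also have "\<dots> \<le> dim ?K + 1" by (simp add: dim_insert)
  finally show ?thesis .
qed

lemma kernels_dim:
  assumes S: "subspace S" and fin: "finite E"
    and add: "\<And>e u v. g e (u+v) = g e u + g e v" and sc: "\<And>e c u. g e (c *s u) = c * g e u"
  shows "dim S \<le> dim {y\<in>S. \<forall>e\<in>E. g e y = 0} + card E"
  using fin
proof (induction E rule: finite_induct)
  case empty then show ?case by simp
next
  case (insert a E)
  let ?K = "{y\<in>S. \<forall>e\<in>E. g e y = 0}"
  have "subspace ?K" by (rule kernel_subspace[OF S add sc])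
  then have "dim ?K \<le> dim {y\<in>?K. g a y = 0} + 1"
    by (rule hyperplane_dim) (simp_all add: add sc)
  moreover have "{y\<in>?K. g a y = 0} = {y\<in>S. \<forall>e\<in>insert a E. g e y = 0}" by auto
  ultimately show ?case using insert by simp
qed

lemma complement_exists:
  assumes P: "subspace P" and Z: "subspace Z" and ZP: "Z \<subseteq> P"
  obtains E where "finite E" "E \<subseteq> P" "card E + dim Z = dim P"
    "\<And>z. z \<in> P \<Longrightarrow> \<exists>c\<in>span E. \<exists>z'\<in>Z. z = c + z'"
proof -
  obtain BZ where BZ: "finite BZ" "BZ \<subseteq> Z" "independent BZ" "span BZ = Z" "card BZ = dim Z"
    using basis_subspace_exists[OF Z] by blast
  obtain B where B: "BZ \<subseteq> B" "B \<subseteq> P" "independent B" "P \<subseteq> span B"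
    using maximal_independent_subset_extend[of BZ P] BZ ZP by blast
  have fB: "finite B" using B finiteI_independent by blast
  have cB: "card B = dim P" using basis_card_eq_dim[OF B(2,4,3)] .
  define E where "E = B - BZ"
  have "card E + dim Z = dim P" using fB B(1) BZ cB unfolding E_def
    by (metis card_Diff_subset finite_subset le_add_diff_inverse2 card_mono)
  moreover have "z \<in> P \<Longrightarrow> \<exists>c\<in>span E. \<exists>z'\<in>Z. z = c + z'" for z
  proof -
    assume "z \<in> P"
    then have "z \<in> span (E \<union> BZ)" using B unfolding E_def by (metis Un_Diff_cancel2 sup.absorb1 subsetD)
    then show ?thesis unfolding span_Un BZ(4) by blast
  qed
  ultimately show ?thesis using that[of E] fB B(2) unfolding E_def by blast
qed

lemma half:
  assumes K: "subspace K" and P: "subspace P"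
    and fadd: "\<And>u v. f (u+v) = f u + f v" and fsc: "\<And>c u. f (c *s u) = c *s f u"
    and badd1: "\<And>u v z. b (u+v) z = b u z + b v z" and bsc1: "\<And>c u z. b (c *s u) z = c * b u z"
    and badd2: "\<And>u v z. b z (u+v) = b z u + b z v" and bsc2: "\<And>c u z. b z (c *s u) = c * b z u"
    and nd: "\<And>y. y\<in>K \<Longrightarrow> (\<forall>z\<in>P. b (f y) z = 0) \<Longrightarrow> f y = 0"
    and adj: "\<And>y z. y\<in>K \<Longrightarrow> z\<in>P \<Longrightarrow> b (f y) z = - b y (f z)"
  shows "dim K + dim {z\<in>P. f z = 0} \<le> dim {y\<in>K. f y = 0} + dim P"
proof -
  have f0: "f 0 = 0" using fsc[of 0 0] by simp
  let ?Z = "{z\<in>P. f z = 0}"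
  have Z: "subspace ?Z" using P unfolding subspace_def by (auto simp: fadd fsc f0)
  obtain E where E: "finite E" "E \<subseteq> P" "card E + dim ?Z = dim P"
    and dec: "\<And>z. z \<in> P \<Longrightarrow> \<exists>c\<in>span E. \<exists>z'\<in>?Z. z = c + z'"
    using complement_exists[OF P Z] by blast
  let ?KE = "{y\<in>K. \<forall>e\<in>E. (\<lambda>e y. b y (f e)) e y = 0}"
  have "dim K \<le> dim ?KE + card E"
    by (rule kernels_dim[OF K E(1)]) (simp_all add: badd1 bsc1)
  moreover have "?KE \<subseteq> {y\<in>K. f y = 0}"
  proof
    fix y assume y: "y \<in> ?KE"
    have sub: "subspace {c. b y (f c) = 0}"
    proof -
      have "b y 0 = 0" using bsc2[where c=0 and u=0 and z=y] by simp
      then show ?thesis unfolding subspace_def by (auto simp: fadd fsc f0 badd2 bsc2)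
    qed
    have "\<forall>z\<in>P. b (f y) z = 0"
    proof
      fix z assume z: "z \<in> P"
      obtain c z' where c: "c \<in> span E" "z' \<in> ?Z" "z = c + z'" using dec[OF z] by blast
      have "c \<in> {c. b y (f c) = 0}"
        using c(1) sub by (rule span_subspace_induct) (use y in auto)
      then have "b y (f z) = 0" using c by (simp add: fadd)
      then show "b (f y) z = 0" using adj[of y z] y z by simp
    qed
    then show "y \<in> {y\<in>K. f y = 0}" using nd y by auto
  qed
  then have "dim ?KE \<le> dim {y\<in>K. f y = 0}" by (rule dim_subset)
  ultimately show ?thesis using E(3) by linarith
qed

end

theorem mainTheorem5:
  fixes scale :: "complex \<Rightarrow> 'v::ab_group_add \<Rightarrow> 'v"
    and g0 g1 :: "'v set" and br :: "'v \<Rightarrow> 'v \<Rightarrow> 'v" and \<theta> :: "'v \<Rightarrow> 'v" and x :: 'v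
  assumes "reductive_symmetric_superpair scale g0 g1 br \<theta>"
    and "x \<in> ppart \<theta> \<inter> g0"
  shows "int (vector_space.dim scale (centralizer br (kpart \<theta> \<inter> g1) x))
           - int (vector_space.dim scale (centralizer br (ppart \<theta> \<inter> g1) x))
         = int (vector_space.dim scale (kpart \<theta> \<inter> g1))
           - int (vector_space.dim scale (ppart \<theta> \<inter> g1))"
proof -
  have ls: "lie_superalgebra scale g0 g1 br" and ei: "even_involution scale g0 g1 br \<theta>"
    using assms(1) unfolding reductive_symmetric_superpair_def symmetric_superpair_def by auto
  obtain b where gf: "good_form scale g0 g1 br \<theta> b"
    using assms(1) unfolding reductive_symmetric_superpair_def by auto
  have vs: "vector_space scale" and fin: "\<exists>B. finite B \<and> module.span scale B = UNIV"
    using ls unfolding lie_superalgebra_def fin_dim_complex_space_def by auto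
  interpret vector_space scale by (rule vs)
  obtain B0 where B0: "finite B0" "span B0 = UNIV" using fin by blast
  obtain B where B: "B \<subseteq> B0" "independent B" "B0 \<subseteq> span B"
    using maximal_independent_subset[of B0] by blast
  have "span B = UNIV"
    using span_mono[OF B(3)] B0(2) by (auto simp: span_span)
  then interpret fd: finite_dimensional_vector_space scale B
    using B B0 by unfold_locales (auto intro: finite_subset)
  have g0sub: "subspace g0" and g1sub: "subspace g1"
    and g01: "\<And>v. \<exists>a\<in>g0. \<exists>c\<in>g1. v = a + c"
    and brl: "\<And>y. Vector_Spaces.linear scale scale (br y)"
    and brl1: "\<And>y. Vector_Spaces.linear scale scale (\<lambda>x. br x y)"
    and grading: "\<And>i j x y. x \<in> grd g0 g1 i \<Longrightarrow> y \<in> grd g0 g1 j \<Longrightarrow> br x y \<in> grd g0 g1 (i \<noteq> j)"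
    and skew: "\<And>i j x y. x \<in> grd g0 g1 i \<Longrightarrow> y \<in> grd g0 g1 j \<Longrightarrow> br x y = scale (- psign i j) (br y x)"
    using ls unfolding lie_superalgebra_def by blast+
  have thl: "Vector_Spaces.linear scale scale \<theta>" and thhom: "\<And>x y. \<theta> (br x y) = br (\<theta> x) (\<theta> y)"
    and thg1: "\<theta> ` g1 \<subseteq> g1" and thth: "\<And>x. \<theta> (\<theta> x) = x"
    using ei unfolding even_involution_def by auto
  have bl2: "\<And>x. Vector_Spaces.linear scale (*) (b x)" and bl1: "\<And>y. Vector_Spaces.linear scale (*) (\<lambda>x. b x y)"
    and bnd: "\<And>x. (\<forall>y. b x y = 0) \<Longrightarrow> x = 0"
    and b01: "\<And>x y. x\<in>g0 \<Longrightarrow> y\<in>g1 \<Longrightarrow> b x y = 0 \<and> b y x = 0"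
    and binv: "\<And>x y z. b (br x y) z = b x (br y z)"
    and bth: "\<And>x y. b (\<theta> x) (\<theta> y) = b x y"
    using gf unfolding good_form_def by blast+
  have thadd: "\<And>u v. \<theta> (u+v) = \<theta> u + \<theta> v" and thsc: "\<And>c u. \<theta> (scale c u) = scale c (\<theta> u)"
    using thl unfolding Vector_Spaces.linear_iff by auto
  have bradd: "\<And>y u v. br y (u+v) = br y u + br y v" and brsc: "\<And>y c u. br y (scale c u) = scale c (br y u)"
    using brl unfolding Vector_Spaces.linear_iff by auto
  have bradd1: "\<And>y u v. br (u+v) y = br u y + br v y" and brsc1: "\<And>y c u. br (scale c u) y = scale c (br u y)"
    using brl1 unfolding Vector_Spaces.linear_iff by auto
  have badd2: "\<And>u v z. b z (u+v) = b z u + b z v" and bsc2: "\<And>c u z. b z (scale c u) = c * b z u"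
    using bl2 unfolding Vector_Spaces.linear_iff by auto
  have badd1: "\<And>u v z. b (u+v) z = b u z + b v z" and bsc1: "\<And>c u z. b (scale c u) z = c * b u z"
    using bl1 unfolding Vector_Spaces.linear_iff by auto
  have neg: "\<And>v. scale (-1) v = - v" by (simp add: scale_minus_left)
  have thneg: "\<And>u. \<theta> (- u) = - \<theta> u" using thsc[where c="-1"] neg by metis
  have brneg: "\<And>y u. br y (- u) = - br y u" using brsc[where c="-1"] neg by metis
  have brneg1: "\<And>y u. br (- u) y = - br u y" using brsc1[where c="-1"] neg by metis
  have bneg1: "\<And>u z. b (- u) z = - b u z" using bsc1[where c="-1"] neg by (metis mult_minus1)
  have x0: "x \<in> g0" and thx: "\<theta> x = - x" using assms(2) unfolding ppart_def by auto
  define K where "K = kpart \<theta> \<inter> g1"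
  define P where "P = ppart \<theta> \<inter> g1"
  have th0: "\<theta> 0 = 0" using thsc[where c=0 and u=0] by simp
  have Ksub: "subspace K" using g1sub unfolding K_def kpart_def subspace_def by (auto simp: thadd thsc th0)
  have Psub: "subspace P" using g1sub unfolding P_def ppart_def subspace_def
    by (auto simp: thadd thsc th0 scale_minus_right)
  have brg1: "\<And>y. y \<in> g1 \<Longrightarrow> br x y \<in> g1"
    using grading[of x False _ True] x0 by (simp add: grd_def)
  have anti: "\<And>y. y \<in> g1 \<Longrightarrow> br x y = - br y x"
    using skew[of x False _ True] x0 neg by (simp add: grd_def psign_def)
  have adj: "\<And>y z. y \<in> g1 \<Longrightarrow> b (br x y) z = - b y (br x z)"
    using anti bneg1 binv by metis
  have thbr: "\<And>y. \<theta> (br x y) = - br x (\<theta> y)" using thhom thx brneg1 by metis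
  have KP: "\<And>y. y \<in> K \<Longrightarrow> br x y \<in> P" using thbr brg1 unfolding K_def P_def kpart_def ppart_def by auto
  have PK: "\<And>y. y \<in> P \<Longrightarrow> br x y \<in> K" using thbr brg1 brneg unfolding K_def P_def kpart_def ppart_def by auto
  have orth1: "\<And>u v. u \<in> P \<Longrightarrow> v \<in> K \<Longrightarrow> b u v = 0"
  proof -
    fix u v assume "u \<in> P" "v \<in> K"
    then have "b u v = - b u v" using bth[of u v] bneg1 unfolding P_def K_def ppart_def kpart_def by auto
    then show "b u v = 0" by simp
  qed
  have orth2: "\<And>u v. u \<in> K \<Longrightarrow> v \<in> P \<Longrightarrow> b u v = 0"
  proof -
    fix u v assume "u \<in> K" "v \<in> P"
    moreover have bneg2: "\<And>u z. b z (- u) = - b z u" using bsc2[where c="-1"] neg by (metis mult_minus1)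
    ultimately have "b u v = - b u v" using bth[of u v]
      unfolding P_def K_def ppart_def kpart_def by auto
    then show "b u v = 0" by simp
  qed
  have decomp: "\<And>c. c \<in> g1 \<Longrightarrow> \<exists>c1\<in>K. \<exists>c2\<in>P. c = c1 + c2"
  proof -
    fix c assume c: "c \<in> g1"
    define c2 where "c2 = scale (1/2) (c - \<theta> c)"
    have half2: "\<And>v. scale (1/2) v + scale (1/2) v = v"
      by (simp add: scale_left_distrib[symmetric])
    have thdiff: "\<And>u v. \<theta> (u - v) = \<theta> u - \<theta> v"
      using thadd thneg by (metis diff_conv_add_uminus)
    have thc: "\<theta> c \<in> g1" using thg1 c by auto
    have "c2 \<in> g1" unfolding c2_def using c thc g1sub by (simp add: subspace_diff subspace_scale)
    moreover have thc2: "\<theta> c2 = - c2"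
    proof -
      have "\<theta> (c - \<theta> c) = - (c - \<theta> c)" by (simp add: thdiff thth)
      then show ?thesis by (simp only: c2_def thsc scale_minus_right)
    qed
    ultimately have c2P: "c2 \<in> P" unfolding P_def ppart_def by auto
    have "c - c2 \<in> g1" using c \<open>c2 \<in> g1\<close> g1sub by (simp add: subspace_diff)
    moreover have "\<theta> (c - c2) = c - c2"
    proof -
      have h: "c2 + c2 = c - \<theta> c" using half2[of "c - \<theta> c"] unfolding c2_def .
      have "\<theta> c + c2 = c - c2" using h by (simp add: algebra_simps)
      then show ?thesis by (simp add: thdiff thc2)
    qed
    ultimately have "c - c2 \<in> K" unfolding K_def kpart_def by auto
    then show "\<exists>c1\<in>K. \<exists>c2\<in>P. c = c1 + c2" using c2P by (metis diff_add_cancel)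
  qed
  have bg0: "\<And>u a. u \<in> g1 \<Longrightarrow> a \<in> g0 \<Longrightarrow> b u a = 0" using b01 by blast
  have ndP: "\<And>u. u \<in> P \<Longrightarrow> (\<forall>z\<in>P. b u z = 0) \<Longrightarrow> u = 0"
  proof -
    fix u assume u: "u \<in> P" "\<forall>z\<in>P. b u z = 0"
    have "b u w = 0" for w
    proof -
      obtain a c where "a \<in> g0" "c \<in> g1" "w = a + c" using g01 by blast
      moreover obtain c1 c2 where "c1 \<in> K" "c2 \<in> P" "c = c1 + c2" using decomp[OF \<open>c \<in> g1\<close>] by blast
      ultimately show ?thesis using u bg0[of u a] orth1[of u c1] by (simp add: badd2 P_def)
    qed
    then show "u = 0" using bnd by blast
  qed
  have ndK: "\<And>u. u \<in> K \<Longrightarrow> (\<forall>z\<in>K. b u z = 0) \<Longrightarrow> u = 0"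
  proof -
    fix u assume u: "u \<in> K" "\<forall>z\<in>K. b u z = 0"
    have "b u w = 0" for w
    proof -
      obtain a c where "a \<in> g0" "c \<in> g1" "w = a + c" using g01 by blast
      moreover obtain c1 c2 where "c1 \<in> K" "c2 \<in> P" "c = c1 + c2" using decomp[OF \<open>c \<in> g1\<close>] by blast
      ultimately show ?thesis using u bg0[of u a] orth2[of u c2] by (simp add: badd2 K_def)
    qed
    then show "u = 0" using bnd by blast
  qed
  have h1: "dim K + dim {z\<in>P. br x z = 0} \<le> dim {y\<in>K. br x y = 0} + dim P"
    by (rule fd.half[OF Ksub Psub, of "br x" b])
      (simp_all add: bradd brsc badd1 bsc1 badd2 bsc2 ndP[OF KP] adj K_def)
  have h2: "dim P + dim {z\<in>K. br x z = 0} \<le> dim {y\<in>P. br x y = 0} + dim K"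
    by (rule fd.half[OF Psub Ksub, of "br x" b])
      (simp_all add: bradd brsc badd1 bsc1 badd2 bsc2 ndK[OF PK] adj P_def)
  show ?thesis using h1 h2 unfolding centralizer_def K_def[symmetric] P_def[symmetric] by linarith
qed

end
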